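(* Let $\preceq$ be a left quasi-order on a group $G$. If $a,b,c\in G$ satisfy $[a,b]=a^{-1}b^{-1}ab=c^{r}$ for some $r\in\mathbb{Z}\setminus\{0\}$, and $c$ commutes with both $a$ and $b$, then either $c\ll a$ or $c\ll b$.
   Context: A left quasi-order on a group $G$ is a binary relation $\preceq$ on $G$ such that: (1) for all $g,h\in G$, $g\preceq h$ or $h\preceq g$; (2) for all $f,g,h\in G$, $f\preceq g$ and $g\preceq h$ imply $f\preceq h$; (3) for all $f,g,h\in G$, $g\preceq h$ implies $fg\preceq fh$. For $g,h\in G$ one writes $g\ll h$ if either $g^k\preceq h$ for all $k\in\mathbb{Z}$, or $g^k\preceq h^{-1}$ for all $k\in\mathbb{Z}$. *)

theory Defs
  imports "HOL-Algebra.Group"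
begin

definition left_quasi_order :: "('a, 'b) monoid_scheme \<Rightarrow> ('a \<Rightarrow> 'a \<Rightarrow> bool) \<Rightarrow> bool" where
  "left_quasi_order G R \<longleftrightarrow>
     (\<forall>g\<in>carrier G. \<forall>h\<in>carrier G. R g h \<or> R h g) \<and>
     (\<forall>f\<in>carrier G. \<forall>g\<in>carrier G. \<forall>h\<in>carrier G. R f g \<longrightarrow> R g h \<longrightarrow> R f h) \<and>
     (\<forall>f\<in>carrier G. \<forall>g\<in>carrier G. \<forall>h\<in>carrier G. R g h \<longrightarrow> R (f \<otimes>\<^bsub>G\<^esub> g) (f \<otimes>\<^bsub>G\<^esub> h))"

definition much_less :: "('a, 'b) monoid_scheme \<Rightarrow> ('a \<Rightarrow> 'a \<Rightarrow> bool) \<Rightarrow> 'a \<Rightarrow> 'a \<Rightarrow> bool" where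
  "much_less G R g h \<longleftrightarrow>
     (\<forall>k::int. R (g [^]\<^bsub>G\<^esub> k) h) \<or> (\<forall>k::int. R (g [^]\<^bsub>G\<^esub> k) (inv\<^bsub>G\<^esub> h))"

end

theory Submission
  imports Defs
begin

locale lqo = group G for G (structure) +
  fixes R :: "'a \<Rightarrow> 'a \<Rightarrow> bool"
  assumes lqo: "left_quasi_order G R"
begin

lemma tot: "g \<in> carrier G \<Longrightarrow> h \<in> carrier G \<Longrightarrow> R g h \<or> R h g"
  using lqo unfolding left_quasi_order_def by blast

lemma rtrans: "f \<in> carrier G \<Longrightarrow> g \<in> carrier G \<Longrightarrow> h \<in> carrier G \<Longrightarrow> R f g \<Longrightarrow> R g h \<Longrightarrow> R f h"
  using lqo unfolding left_quasi_order_def by blast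

lemma lmult: "f \<in> carrier G \<Longrightarrow> g \<in> carrier G \<Longrightarrow> h \<in> carrier G \<Longrightarrow> R g h \<Longrightarrow> R (f \<otimes> g) (f \<otimes> h)"
  using lqo unfolding left_quasi_order_def by blast

lemma lcancel:
  assumes "f \<in> carrier G" "g \<in> carrier G" "h \<in> carrier G" "R (f \<otimes> g) (f \<otimes> h)"
  shows "R g h"
proof -
  have "R (inv f \<otimes> (f \<otimes> g)) (inv f \<otimes> (f \<otimes> h))"
    by (rule lmult) (use assms in auto)
  moreover have "inv f \<otimes> (f \<otimes> g) = g" "inv f \<otimes> (f \<otimes> h) = h"
    using assms by (metis inv_closed l_inv l_one m_assoc)+
  ultimately show ?thesis by metis
qed

lemma cancel_l: "x \<in> carrier G \<Longrightarrow> y \<in> carrier G \<Longrightarrow> x \<otimes> (inv x \<otimes> y) = y"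
  by (simp add: m_assoc[symmetric])

lemma comm_int_pow:
  assumes "x \<in> carrier G" "y \<in> carrier G" "x \<otimes> y = y \<otimes> x"
  shows "x [^] (k::int) \<otimes> y = y \<otimes> x [^] k"
proof (cases k rule: int_cases)
  case (nonneg n)
  then show ?thesis using assms by (metis int_pow_int group_commutes_pow)
next
  case (neg n)
  define z where "z = x [^] Suc n"
  have z: "z \<in> carrier G" "z \<otimes> y = y \<otimes> z" using assms unfolding z_def
    by (simp del: nat_pow_Suc, metis group_commutes_pow)
  have "y \<otimes> inv z = inv z \<otimes> (z \<otimes> y) \<otimes> inv z"
    using z assms by (metis m_assoc inv_closed l_inv l_one)
  also have "\<dots> = inv z \<otimes> (y \<otimes> z) \<otimes> inv z" using z(2) by simp
  also have "\<dots> = inv z \<otimes> y" using z assms by (simp add: m_assoc)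
  finally have "inv z \<otimes> y = y \<otimes> inv z" by simp
  then show ?thesis unfolding neg using assms by (metis int_pow_neg_int z_def)
qed

lemma comm_mult:
  assumes "x \<in> carrier G" "y \<in> carrier G" "c \<in> carrier G"
    "x \<otimes> c = c \<otimes> x" "y \<otimes> c = c \<otimes> y"
  shows "(x \<otimes> y) \<otimes> c = c \<otimes> (x \<otimes> y)"
  using assms by (metis m_assoc m_closed)

lemma lower_mult:
  assumes "x \<in> carrier G" "y \<in> carrier G" "c \<in> carrier G" "x \<otimes> c = c \<otimes> x"
    "R (c [^] (p::int)) x" "R (c [^] (s::int)) y"
  shows "R (c [^] (p + s)) (x \<otimes> y)"
proof -
  have 1: "R (x \<otimes> c [^] s) (x \<otimes> y)" by (rule lmult) (use assms in auto)
  have e: "x \<otimes> c [^] s = c [^] s \<otimes> x" using assms comm_int_pow[of c x s] by simp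
  have h2: "R (c [^] s \<otimes> c [^] p) (c [^] s \<otimes> x)" by (rule lmult) (use assms in auto)
  have e2: "c [^] s \<otimes> c [^] p = c [^] (p + s)" using assms by (metis int_pow_mult add.commute)
  have A: "R (c [^] (p + s)) (c [^] s \<otimes> x)" using h2 e2 by simp
  have B: "R (c [^] s \<otimes> x) (x \<otimes> y)" using 1 e by simp
  show ?thesis by (rule rtrans[OF _ _ _ A B]) (use assms in auto)
qed

lemma upper_mult:
  assumes "x \<in> carrier G" "y \<in> carrier G" "c \<in> carrier G" "x \<otimes> c = c \<otimes> x"
    "R x (c [^] (p::int))" "R y (c [^] (s::int))"
  shows "R (x \<otimes> y) (c [^] (p + s))"
proof -
  have 1: "R (x \<otimes> y) (x \<otimes> c [^] s)" by (rule lmult) (use assms in auto)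
  have e: "x \<otimes> c [^] s = c [^] s \<otimes> x" using assms comm_int_pow[of c x s] by simp
  have h2: "R (c [^] s \<otimes> x) (c [^] s \<otimes> c [^] p)" by (rule lmult) (use assms in auto)
  have e2: "c [^] s \<otimes> c [^] p = c [^] (p + s)" using assms by (metis int_pow_mult add.commute)
  have A: "R (c [^] s \<otimes> x) (c [^] (p + s))" using h2 e2 by simp
  have B: "R (x \<otimes> y) (c [^] s \<otimes> x)" using 1 e by simp
  show ?thesis by (rule rtrans[OF _ _ _ B A]) (use assms in auto)
qed

lemma lower_pow:
  assumes "x \<in> carrier G" "c \<in> carrier G" "x \<otimes> c = c \<otimes> x" "R (c [^] (p::int)) x"
  shows "R (c [^] (int n * p)) (x [^] (n::nat))"
proof (induction n)
  case 0
  then show ?case using tot[of \<one> \<one>] by simp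
next
  case (Suc n)
  have "R (c [^] (int n * p + p)) (x [^] n \<otimes> x)"
    using assms Suc by (intro lower_mult) (auto simp: group_commutes_pow)
  then show ?case by (simp add: algebra_simps)
qed

lemma upper_pow:
  assumes "x \<in> carrier G" "c \<in> carrier G" "x \<otimes> c = c \<otimes> x" "R x (c [^] (p::int))"
  shows "R (x [^] (n::nat)) (c [^] (int n * p))"
proof (induction n)
  case 0
  then show ?case using tot[of \<one> \<one>] by simp
next
  case (Suc n)
  have "R (x [^] n \<otimes> x) (c [^] (int n * p + p))"
    using assms Suc by (intro upper_mult) (auto simp: group_commutes_pow)
  then show ?case by (simp add: algebra_simps)
qed

lemma mono_up:
  assumes "c \<in> carrier G" "R \<one> c" "k \<le> l"
  shows "R (c [^] (k::int)) (c [^] l)"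
proof -
  have step: "R (c [^] j) (c [^] (j + 1))" for j :: int
  proof -
    have "R (c [^] j \<otimes> \<one>) (c [^] j \<otimes> c)" by (rule lmult) (use assms in auto)
    thus ?thesis using assms by (simp add: int_pow_mult)
  qed
  have "R (c [^] k) (c [^] (k + int m))" for m
  proof (induction m)
    case 0 then show ?case using tot[of "c [^] k" "c [^] k"] assms by simp
  next
    case (Suc m)
    have "R (c [^] (k + int m)) (c [^] (k + int m + 1))" by (rule step)
    note st = this
    have eq: "k + int (Suc m) = k + int m + 1" by simp
    show ?case unfolding eq by (rule rtrans[OF _ _ _ Suc.IH st]) (use assms in auto)
  qed
  from this[of "nat (l - k)"] assms show ?thesis by simp
qed

lemma mono_down:
  assumes "c \<in> carrier G" "R c \<one>" "k \<le> l"
  shows "R (c [^] (l::int)) (c [^] k)"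
proof -
  have step: "R (c [^] (j + 1)) (c [^] j)" for j :: int
  proof -
    have "R (c [^] j \<otimes> c) (c [^] j \<otimes> \<one>)" by (rule lmult) (use assms in auto)
    thus ?thesis using assms by (simp add: int_pow_mult)
  qed
  have "R (c [^] (k + int m)) (c [^] k)" for m
  proof (induction m)
    case 0 then show ?case using tot[of "c [^] k" "c [^] k"] assms by simp
  next
    case (Suc m)
    have "R (c [^] (k + int m + 1)) (c [^] (k + int m))" by (rule step)
    note st = this
    have eq: "k + int (Suc m) = k + int m + 1" by simp
    show ?case unfolding eq by (rule rtrans[OF _ _ _ st Suc.IH]) (use assms in auto)
  qed
  from this[of "nat (l - k)"] assms show ?thesis by simp
qed


lemma comm_L1:
  assumes ab: "a \<in> carrier G" "b \<in> carrier G" "c \<in> carrier G"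
    and ca: "c \<otimes> a = a \<otimes> c" and cb: "c \<otimes> b = b \<otimes> c"
    and rel: "a \<otimes> b = b \<otimes> a \<otimes> c [^] (r::int)"
  shows "a [^] (n::nat) \<otimes> b = b \<otimes> a [^] n \<otimes> c [^] (r * int n)"
proof (induction n)
  case 0
  then show ?case using ab by simp
next
  case (Suc n)
  have ka: "c [^] k \<otimes> a = a \<otimes> c [^] k" for k :: int using comm_int_pow[of c a k] ab ca by simp
  have "a [^] Suc n \<otimes> b = a [^] n \<otimes> (a \<otimes> b)" using ab by (simp add: m_assoc)
  also have "\<dots> = (a [^] n \<otimes> b) \<otimes> a \<otimes> c [^] r" using ab rel by (simp add: m_assoc)
  also have "\<dots> = b \<otimes> a [^] n \<otimes> (c [^] (r * int n) \<otimes> a) \<otimes> c [^] r" using ab Suc by (simp add: m_assoc)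
  also have "\<dots> = b \<otimes> a [^] n \<otimes> (a \<otimes> c [^] (r * int n)) \<otimes> c [^] r" using ka by simp
  also have "\<dots> = b \<otimes> (a [^] n \<otimes> a) \<otimes> (c [^] (r * int n) \<otimes> c [^] r)" using ab by (simp add: m_assoc)
  also have "\<dots> = b \<otimes> a [^] Suc n \<otimes> c [^] (r * int (Suc n))"
    using ab by (simp add: int_pow_mult[symmetric] algebra_simps)
  finally show ?case .
qed

lemma comm_L2:
  assumes ab: "a \<in> carrier G" "b \<in> carrier G" "c \<in> carrier G"
    and ca: "c \<otimes> a = a \<otimes> c" and cb: "c \<otimes> b = b \<otimes> c"
    and rel: "a \<otimes> b = b \<otimes> a \<otimes> c [^] (r::int)"
  shows "a [^] (n::nat) \<otimes> b [^] (m::nat) = b [^] m \<otimes> a [^] n \<otimes> c [^] (r * int n * int m)"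
proof (induction m)
  case 0
  then show ?case using ab by simp
next
  case (Suc m)
  have kb: "c [^] k \<otimes> b = b \<otimes> c [^] k" for k :: int using comm_int_pow[of c b k] ab cb by simp
  have "a [^] n \<otimes> b [^] Suc m = (a [^] n \<otimes> b [^] m) \<otimes> b" using ab by (simp add: m_assoc)
  also have "\<dots> = b [^] m \<otimes> a [^] n \<otimes> (c [^] (r * int n * int m) \<otimes> b)" using ab Suc by (simp add: m_assoc)
  also have "\<dots> = b [^] m \<otimes> (a [^] n \<otimes> b) \<otimes> c [^] (r * int n * int m)" using ab kb by (simp add: m_assoc)
  also have "\<dots> = b [^] m \<otimes> (b \<otimes> a [^] n \<otimes> c [^] (r * int n)) \<otimes> c [^] (r * int n * int m)"
    using comm_L1[OF assms] by simp
  also have "\<dots> = (b [^] m \<otimes> b) \<otimes> a [^] n \<otimes> (c [^] (r * int n) \<otimes> c [^] (r * int n * int m))"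
    using ab by (simp add: m_assoc)
  also have "\<dots> = b [^] Suc m \<otimes> a [^] n \<otimes> c [^] (r * int n * int (Suc m))"
    using ab by (simp add: int_pow_mult[symmetric] algebra_simps)
  finally show ?case .
qed


lemma core:
  assumes ab: "a \<in> carrier G" "b \<in> carrier G" "c \<in> carrier G"
    and ca: "c \<otimes> a = a \<otimes> c" and cb: "c \<otimes> b = b \<otimes> c"
    and c1: "R \<one> c" and nc: "\<not> R c \<one>" and r: "r > 0"
    and rel: "a \<otimes> b = b \<otimes> a \<otimes> c [^] (r::int)"
    and bd: "R (c [^] (p::int)) a" "R a (c [^] (q::int))" "R (c [^] (u::int)) b" "R b (c [^] (v::int))"
  shows False
proof -
  define D where "D = q + v - u - p"
  define n :: nat where "n = nat (\<bar>D\<bar> + 1)"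
  have nD: "int n = \<bar>D\<bar> + 1" by (simp add: n_def)
  have ac: "a \<otimes> c = c \<otimes> a" "b \<otimes> c = c \<otimes> b" using ca cb by simp_all
  have anc: "a [^] n \<otimes> c = c \<otimes> a [^] n" using ab ac by (simp add: group_commutes_pow)
  have bnc: "b [^] n \<otimes> c = c \<otimes> b [^] n" using ab ac by (simp add: group_commutes_pow)
  have abn: "a [^] n \<in> carrier G" "b [^] n \<in> carrier G" using ab by auto
  have U1: "R (a [^] n) (c [^] (int n * q))" using upper_pow[OF ab(1) ab(3) ac(1) bd(2)] .
  have U2: "R (b [^] n) (c [^] (int n * v))" using upper_pow[OF ab(2) ab(3) ac(2) bd(4)] .
  have L1: "R (c [^] (int n * p)) (a [^] n)" using lower_pow[OF ab(1) ab(3) ac(1) bd(1)] .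
  have L2: "R (c [^] (int n * u)) (b [^] n)" using lower_pow[OF ab(2) ab(3) ac(2) bd(3)] .
  have U: "R (a [^] n \<otimes> b [^] n) (c [^] (int n * q + int n * v))"
    using upper_mult[OF abn(1) abn(2) ab(3) anc U1 U2] .
  have Lw: "R (c [^] (int n * u + int n * p)) (b [^] n \<otimes> a [^] n)"
    using lower_mult[OF abn(2) abn(1) ab(3) bnc L2 L1] .
  define k where "k = r * int n * int n"
  have Lw2: "R (c [^] k \<otimes> c [^] (int n * u + int n * p)) (c [^] k \<otimes> (b [^] n \<otimes> a [^] n))"
    by (rule lmult) (use ab Lw in auto)
  have cm: "(b [^] n \<otimes> a [^] n) \<otimes> c = c \<otimes> (b [^] n \<otimes> a [^] n)"
    using comm_mult[OF abn(2) abn(1) ab(3) bnc anc] .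
  have e1: "c [^] k \<otimes> (b [^] n \<otimes> a [^] n) = b [^] n \<otimes> a [^] n \<otimes> c [^] k"
    using comm_int_pow[of c "b [^] n \<otimes> a [^] n" k] ab cm by simp
  have e2: "b [^] n \<otimes> a [^] n \<otimes> c [^] k = a [^] n \<otimes> b [^] n"
    using comm_L2[OF ab ca cb rel, of n n] by (simp add: k_def)
  have e3: "c [^] k \<otimes> c [^] (int n * u + int n * p) = c [^] (k + (int n * u + int n * p))"
    using ab by (simp add: int_pow_mult)
  define N where "N = k + (int n * u + int n * p)"
  define M where "M = int n * q + int n * v"
  have NM: "R (c [^] N) (c [^] M)"
  proof -
    have X: "R (c [^] N) (a [^] n \<otimes> b [^] n)" using Lw2 e1 e2 e3 by (simp add: N_def)
    show ?thesis by (rule rtrans[OF _ _ _ X U[folded M_def]]) (use ab in auto)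
  qed
  have ar1: "1 * (int n * int n) \<le> r * (int n * int n)"
    using r by (intro mult_right_mono) auto
  have ar2: "int n * 1 \<le> int n * (int n - D)"
    using nD by (intro mult_left_mono) auto
  have ar3: "int n * (int n - D) = int n * int n - (int n * q + int n * v - int n * u - int n * p)"
    by (simp add: D_def algebra_simps)
  have ar4: "k = r * (int n * int n)" by (simp add: k_def algebra_simps)
  have "M + 1 \<le> N" using ar1 ar2 ar3 ar4 nD unfolding N_def M_def by linarith
  hence Y: "R (c [^] (M + 1)) (c [^] N)" using mono_up[OF ab(3) c1] by blast
  have "R (c [^] (M + 1)) (c [^] M)" by (rule rtrans[OF _ _ _ Y NM]) (use ab in auto)
  hence "R (c [^] M \<otimes> c) (c [^] M \<otimes> \<one>)" using ab by (simp add: int_pow_mult)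
  note Z = this
  have "R c \<one>" by (rule lcancel[OF _ _ _ Z]) (use ab in auto)
  with nc show False by simp
qed


lemma bounds:
  assumes ab: "a \<in> carrier G" "c \<in> carrier G" and ca: "c \<otimes> a = a \<otimes> c"
    and nm: "\<not> much_less G R c a"
  shows "\<exists>p q. R (c [^] (p::int)) a \<and> R a (c [^] (q::int)) \<and> \<not> R (c [^] q) a"
proof -
  from nm obtain q i where q: "\<not> R (c [^] (q::int)) a" and i: "\<not> R (c [^] (i::int)) (inv a)"
    unfolding much_less_def by blast
  have q2: "R a (c [^] q)" using q tot[of a "c [^] q"] ab by auto
  have i2: "R (inv a) (c [^] i)" using i tot[of "inv a" "c [^] i"] ab by auto
  have "R ((a \<otimes> c [^] (- i)) \<otimes> inv a) ((a \<otimes> c [^] (- i)) \<otimes> c [^] i)"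
    by (rule lmult) (use ab i2 in auto)
  moreover have "(a \<otimes> c [^] (- i)) \<otimes> inv a = c [^] (- i)"
  proof -
    have "a \<otimes> c [^] (- i) = c [^] (- i) \<otimes> a" using comm_int_pow[of c a "-i"] ab ca by simp
    thus ?thesis using ab by (simp add: m_assoc)
  qed
  moreover have "(a \<otimes> c [^] (- i)) \<otimes> c [^] i = a"
    using ab by (simp add: m_assoc int_pow_mult[symmetric])
  ultimately have "R (c [^] (- i)) a" by simp
  with q q2 show ?thesis by blast
qed

lemma much_less_inv:
  assumes "c \<in> carrier G"
  shows "much_less G R (inv c) x = much_less G R c x"
proof -
  have e: "(inv c) [^] (k::int) = c [^] (- k)" for k using assms by (simp add: int_pow_inv int_pow_neg)
  have "(\<forall>k::int. P (c [^] (- k))) = (\<forall>k::int. P (c [^] k))" for P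
  proof (intro iffI allI)
    fix k :: int
    assume "\<forall>k::int. P (c [^] (- k))"
    then have "P (c [^] (- (- k)))" by blast
    thus "P (c [^] k)" by simp
  next
    fix k :: int
    assume "\<forall>k::int. P (c [^] k)"
    thus "P (c [^] (- k))" by blast
  qed
  note P = this
  show ?thesis unfolding much_less_def e using P[of "\<lambda>y. R y x"] P[of "\<lambda>y. R y (inv x)"] by simp
qed

lemma oriented:
  assumes ab: "a \<in> carrier G" "b \<in> carrier G" "c \<in> carrier G"
    and ca: "c \<otimes> a = a \<otimes> c" and cb: "c \<otimes> b = b \<otimes> c"
    and c1: "R \<one> c" and nc: "\<not> R c \<one>" and r: "r \<noteq> 0"
    and rel: "inv a \<otimes> inv b \<otimes> a \<otimes> b = c [^] (r::int)"
  shows "much_less G R c a \<or> much_less G R c b"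
proof (rule ccontr)
  assume "\<not> ?thesis"
  then obtain p q u v where bd: "R (c [^] (p::int)) a" "R a (c [^] (q::int))" "R (c [^] (u::int)) b" "R b (c [^] (v::int))"
    using bounds[OF ab(1) ab(3) ca] bounds[OF ab(2) ab(3) cb] by blast
  have rel1: "a \<otimes> b = b \<otimes> a \<otimes> c [^] r"
  proof -
    have "b \<otimes> a \<otimes> c [^] r = b \<otimes> a \<otimes> (inv a \<otimes> inv b \<otimes> a \<otimes> b)" using rel by simp
    also have "\<dots> = a \<otimes> b" using ab by (simp add: m_assoc cancel_l)
    finally show ?thesis by simp
  qed
  show False
  proof (cases "r > 0")
    case True
    show False by (rule core[OF ab ca cb c1 nc True rel1 bd])
  next
    case False
    hence r': "- r > 0" using r by simp
    have "a \<otimes> b \<otimes> c [^] (- r) = b \<otimes> a \<otimes> c [^] r \<otimes> c [^] (- r)" using rel1 by simp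
    also have "\<dots> = b \<otimes> a" using ab by (simp add: m_assoc int_pow_mult[symmetric])
    finally have rel2: "b \<otimes> a = a \<otimes> b \<otimes> c [^] (- r)" by simp
    show False by (rule core[OF ab(2) ab(1) ab(3) cb ca c1 nc r' rel2 bd(3) bd(4) bd(1) bd(2)])
  qed
qed

end

lemma lemma5p1_aux:
  fixes G (structure) and R :: "'a \<Rightarrow> 'a \<Rightarrow> bool" and a b c :: 'a and r :: int
  assumes "group G"
    and "left_quasi_order G R"
    and "a \<in> carrier G" and "b \<in> carrier G" and "c \<in> carrier G"
    and "r \<noteq> 0"
    and "inv a \<otimes> inv b \<otimes> a \<otimes> b = c [^] r"
    and "c \<otimes> a = a \<otimes> c" and "c \<otimes> b = b \<otimes> c"
  shows "much_less G R c a \<or> much_less G R c b"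
proof -
  interpret lqo G R using assms(1,2) by (simp add: lqo_def lqo_axioms_def)
  note ab = assms(3,4,5)
  consider "R \<one> c" "\<not> R c \<one>" | "R c \<one>" "\<not> R \<one> c" | "R c \<one>" "R \<one> c"
    using tot[of c \<one>] ab by blast
  then show ?thesis
  proof cases
    case 1
    show ?thesis using oriented[OF ab assms(8,9) 1 assms(6,7)] .
  next
    case 2
    have ic: "inv c \<in> carrier G" using ab by simp
    have c1: "R \<one> (inv c)"
    proof -
      have "R (inv c \<otimes> c) (inv c \<otimes> \<one>)" by (rule lmult) (use ab 2 in auto)
      thus ?thesis using ab by simp
    qed
    have nc: "\<not> R (inv c) \<one>"
    proof
      assume "R (inv c) \<one>"
      note W = this
      have "R (c \<otimes> inv c) (c \<otimes> \<one>)" by (rule lmult[OF _ _ _ W]) (use ab in auto)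
      thus False using ab 2 by simp
    qed
    have ca: "inv c \<otimes> a = a \<otimes> inv c" and cb: "inv c \<otimes> b = b \<otimes> inv c"
      using comm_int_pow[of c a "-1"] comm_int_pow[of c b "-1"] ab assms(8,9)
      by (simp_all add: int_pow_neg)
    have rel: "inv a \<otimes> inv b \<otimes> a \<otimes> b = inv c [^] (- r)"
      using assms(7) ab by (simp add: int_pow_inv int_pow_neg)
    have "much_less G R (inv c) a \<or> much_less G R (inv c) b"
      using oriented[OF ab(1,2) ic ca cb c1 nc _ rel] assms(6) by simp
    then show ?thesis using much_less_inv[OF ab(3)] by simp
  next
    case 3
    have "\<not> much_less G R c a" if nm: "\<not> much_less G R c a" for dummy :: bool
      using nm .
    show ?thesis
    proof (rule ccontr)
      assume "\<not> ?thesis"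
      then obtain p q where pq: "R (c [^] (p::int)) a" "\<not> R (c [^] (q::int)) a"
        using bounds[OF ab(1) ab(3) assms(8)] by blast
      have "R (c [^] q) (c [^] p)"
      proof (cases "p \<le> q")
        case True show ?thesis using mono_down[OF ab(3) 3(1) True] by simp
      next
        case False show ?thesis using mono_up[OF ab(3) 3(2)] False by simp
      qed
      note V = this
      have "R (c [^] q) a" by (rule rtrans[OF _ _ _ V pq(1)]) (use ab in auto)
      with pq(2) show False by simp
    qed
  qed
qed

theorem lemma5p1:
  fixes G (structure) and R :: "'a \<Rightarrow> 'a \<Rightarrow> bool" and a b c :: 'a and r :: int
  assumes "group G"
    and "left_quasi_order G R"
    and "a \<in> carrier G" and "b \<in> carrier G" and "c \<in> carrier G"
    and "r \<noteq> 0"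
    and "inv a \<otimes> inv b \<otimes> a \<otimes> b = c [^] r"
    and "c \<otimes> a = a \<otimes> c" and "c \<otimes> b = b \<otimes> c"
  shows "much_less G R c a \<or> much_less G R c b"
  using lemma5p1_aux[OF assms] .

end
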